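(* Let $\mathcal{V}$ and $\mathcal{W}$ be quaternionic two-sided Banach algebras with unit $1\neq 0$, let $\mathcal{A}:\mathcal{V}\to\mathcal{W}$ be a homomorphism, and let $a,b\in\mathcal{V}$. (1) If $ab\in Pr(\Phi_{\mathcal{A}})$ and $ba\in Pr(\Phi_{\mathcal{A}})$, then $$\sigma_{S,\mathcal{A}}^{\Phi}(a+b)\setminus\{0\}=\left[\sigma_{S,\mathcal{A}}^{\Phi}(a)\cup\sigma_{S,\mathcal{A}}^{\Phi}(b)\right]\setminus\{0\}.$$ (2) If $ab\in \mathcal{A}^{-1}(0)$ and $ba\in \mathcal{A}^{-1}(0)$, then $$\sigma_{S,\mathcal{A}}^{\Phi^{0}}(a+b)\setminus\{0\}\subset\left[\sigma_{S,\mathcal{A}}^{\Phi^{0}}(a)\cup\sigma_{S,\mathcal{A}}^{\Phi^{0}}(b)\right]\setminus\{0\},$$ and if, further, $\sigma_{S,\mathcal{A}}^{\Phi^{0}}(a)=\sigma_{S,\mathcal{A}}^{\Phi}(a)$, then $$\sigma_{S,\mathcal{A}}^{\Phi^{0}}(a+b)\setminus\{0\}=\left[\sigma_{S,\mathcal{A}}^{\Phi^{0}}(a)\cup\sigma_{S,\mathcal{A}}^{\Phi^{0}}(b)\right]\setminus\{0\}.$$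
   Context: $\mathbb{H}$ denotes the quaternions; for $q\in\mathbb{H}$, $Re(q)$ is its real part and $|q|$ its norm. A quaternionic two-sided Banach algebra with unit is a two-sided $\mathbb{H}$-vector space $\mathcal{V}$ with an associative product satisfying $x(y+z)=xy+xz$, $(x+y)z=xz+yz$, $q(xy)=(qx)y$, $(xy)q=x(yq)$ for $x,y,z\in\mathcal{V}$, $q\in\mathbb{H}$, complete with respect to a norm satisfying $\|qx\|=|q|\|x\|=\|xq\|$ and $\|xy\|\le\|x\|\|y\|$, with a unit $1_{\mathcal{V}}$, $\|1_{\mathcal{V}}\|=1$. A homomorphism $\mathcal{A}:\mathcal{V}\to\mathcal{W}$ satisfies $\mathcal{A}(u+v)=\mathcal{A}(u)+\mathcal{A}(v)$, $\mathcal{A}(uv)=\mathcal{A}(u)\mathcal{A}(v)$, $\mathcal{A}(qu)=q\mathcal{A}(u)$, $\mathcal{A}(uq)=\mathcal{A}(u)q$, $\mathcal{A}(1_{\mathcal{V}})=1_{\mathcal{W}}$. $\mathcal{V}^{-1},\mathcal{W}^{-1}$ denote the groups of invertible elements. For $v\in\mathcal{V}$ and $q\in\mathbb{H}$ put $R_q(v)=v^2-2Re(q)v+|q|^2 1_{\mathcal{V}}$. Define $\Phi_{\mathcal{A}}=\{v\in\mathcal{V}:\mathcal{A}(v)\in\mathcal{W}^{-1}\}$ (Fredholm elements), $\Phi_{\mathcal{A}}^0=\mathcal{V}^{-1}+\mathcal{A}^{-1}(0)$ (Weyl elements), $Pr(\Phi_{\mathcal{A}})=\{p\in\mathcal{V}: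 p+t\in\Phi_{\mathcal{A}}\ \forall t\in\Phi_{\mathcal{A}}\}$ (Fredholm perturbations). The Fredholm S-spectrum is $\sigma_{S,\mathcal{A}}^{\Phi}(v)=\{q\in\mathbb{H}: R_q(v)\notin\Phi_{\mathcal{A}}\}$ and the Weyl S-spectrum is $\sigma_{S,\mathcal{A}}^{\Phi^0}(v)=\{q\in\mathbb{H}: R_q(v)\notin\Phi_{\mathcal{A}}^0\}$. *)

theory Defs
  imports "HOL-Analysis.Analysis"
begin

datatype quat = Quat (qRe: real) (qI: real) (qJ: real) (qK: real)

definition qadd :: "quat \<Rightarrow> quat \<Rightarrow> quat" where
  "qadd p q = Quat (qRe p + qRe q) (qI p + qI q) (qJ p + qJ q) (qK p + qK q)"

definition qmul :: "quat \<Rightarrow> quat \<Rightarrow> quat" where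
  "qmul p q = Quat
     (qRe p * qRe q - qI p * qI q - qJ p * qJ q - qK p * qK q)
     (qRe p * qI q + qI p * qRe q + qJ p * qK q - qK p * qJ q)
     (qRe p * qJ q - qI p * qK q + qJ p * qRe q + qK p * qI q)
     (qRe p * qK q + qI p * qJ q - qJ p * qI q + qK p * qRe q)"

definition qofreal :: "real \<Rightarrow> quat" where
  "qofreal r = Quat r 0 0 0"

definition qnorm :: "quat \<Rightarrow> real" where
  "qnorm q = sqrt ((qRe q)\<^sup>2 + (qI q)\<^sup>2 + (qJ q)\<^sup>2 + (qK q)\<^sup>2)"

text \<open>The underlying type is a real Banach algebra with unit (norm 1 = 1, 1 \<noteq> 0,
  submultiplicative norm, complete); lm / rm are the left / right quaternionic
  scalar multiplications, whose restriction to real scalars is the real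
  scalar multiplication of the type.\<close>

definition qbanach_alg ::
  "(quat \<Rightarrow> 'v::{banach,real_normed_algebra_1} \<Rightarrow> 'v) \<Rightarrow> ('v \<Rightarrow> quat \<Rightarrow> 'v) \<Rightarrow> bool" where
  "qbanach_alg lm rm \<longleftrightarrow>
     (\<forall>q x y. lm q (x + y) = lm q x + lm q y) \<and>
     (\<forall>q p x. lm (qadd q p) x = lm q x + lm p x) \<and>
     (\<forall>q p x. lm (qmul q p) x = lm q (lm p x)) \<and>
     (\<forall>x. lm (qofreal 1) x = x) \<and>
     (\<forall>q x y. rm (x + y) q = rm x q + rm y q) \<and>
     (\<forall>q p x. rm x (qadd q p) = rm x q + rm x p) \<and>
     (\<forall>q p x. rm x (qmul q p) = rm (rm x q) p) \<and>
     (\<forall>x. rm x (qofreal 1) = x) \<and>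
     (\<forall>q p x. rm (lm q x) p = lm q (rm x p)) \<and>
     (\<forall>r x. lm (qofreal r) x = r *\<^sub>R x) \<and>
     (\<forall>r x. rm x (qofreal r) = r *\<^sub>R x) \<and>
     (\<forall>q x y. lm q (x * y) = lm q x * y) \<and>
     (\<forall>q x y. rm (x * y) q = x * rm y q) \<and>
     (\<forall>q x. norm (lm q x) = qnorm q * norm x) \<and>
     (\<forall>q x. norm (rm x q) = qnorm q * norm x)"

definition qhom ::
  "(quat \<Rightarrow> 'v::{banach,real_normed_algebra_1} \<Rightarrow> 'v) \<Rightarrow> ('v \<Rightarrow> quat \<Rightarrow> 'v) \<Rightarrow>
   (quat \<Rightarrow> 'w::{banach,real_normed_algebra_1} \<Rightarrow> 'w) \<Rightarrow> ('w \<Rightarrow> quat \<Rightarrow> 'w) \<Rightarrow>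
   ('v \<Rightarrow> 'w) \<Rightarrow> bool" where
  "qhom lmV rmV lmW rmW A \<longleftrightarrow>
     (\<forall>u v. A (u + v) = A u + A v) \<and>
     (\<forall>u v. A (u * v) = A u * A v) \<and>
     (\<forall>q u. A (lmV q u) = lmW q (A u)) \<and>
     (\<forall>q u. A (rmV u q) = rmW (A u) q) \<and>
     A 1 = 1"

definition invertibles :: "'a::ring_1 set" where
  "invertibles = {x. \<exists>y. x * y = 1 \<and> y * x = 1}"

definition fredholm :: "('v::ring_1 \<Rightarrow> 'w::ring_1) \<Rightarrow> 'v set" where
  "fredholm A = {v. A v \<in> invertibles}"

definition weyl :: "('v::ring_1 \<Rightarrow> 'w::ring_1) \<Rightarrow> 'v set" where
  "weyl A = {u + k | u k. u \<in> invertibles \<and> A k = 0}"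

definition fred_pert :: "('v::ring_1 \<Rightarrow> 'w::ring_1) \<Rightarrow> 'v set" where
  "fred_pert A = {p. \<forall>t \<in> fredholm A. p + t \<in> fredholm A}"

definition Rq :: "'v::real_normed_algebra_1 \<Rightarrow> quat \<Rightarrow> 'v" where
  "Rq v q = v * v - (2 * qRe q) *\<^sub>R v + (qnorm q)\<^sup>2 *\<^sub>R 1"

definition fred_S_spectrum :: "('v::real_normed_algebra_1 \<Rightarrow> 'w::ring_1) \<Rightarrow> 'v \<Rightarrow> quat set" where
  "fred_S_spectrum A v = {q. Rq v q \<notin> fredholm A}"

definition weyl_S_spectrum :: "('v::real_normed_algebra_1 \<Rightarrow> 'w::ring_1) \<Rightarrow> 'v \<Rightarrow> quat set" where
  "weyl_S_spectrum A v = {q. Rq v q \<notin> weyl A}"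

definition qzero :: quat where "qzero = Quat 0 0 0 0"

end

theory Submission
  imports Defs
begin

lemma ident:
  fixes a b :: "'v::real_normed_algebra_1"
  shows "(a*a - s*\<^sub>R a + t*\<^sub>R 1) * (b*b - s*\<^sub>R b + t*\<^sub>R 1) = t *\<^sub>R ((a+b)*(a+b) - s*\<^sub>R(a+b) + t*\<^sub>R 1) + ((a - s*\<^sub>R 1)*(a*b)*(b - s*\<^sub>R 1) - t*\<^sub>R(a*b+b*a))"
  by (simp add: algebra_simps)

lemma inv_mult: "x \<in> invertibles \<Longrightarrow> y \<in> invertibles \<Longrightarrow> (x*y::'a::ring_1) \<in> invertibles"
  unfolding invertibles_def
proof clarify
  fix x' y' assume h: "x * x' = 1" "x' * x = 1" "y * y' = 1" "y' * y = 1"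
  have "x * y * (y' * x') = x * (y * y') * x'" by (simp add: mult.assoc)
  then have "x * y * (y' * x') = 1" using h by simp
  moreover have "(y' * x') * (x * y) = y' * (x' * x) * y" by (simp add: mult.assoc)
  then have "(y' * x') * (x * y) = 1" using h by simp
  ultimately show "\<exists>z. x * y * z = 1 \<and> z * (x * y) = 1" by blast
qed

lemma inv_one: "(1::'a::ring_1) \<in> invertibles"
  unfolding invertibles_def by auto

lemma inv_uminus: "(x::'a::ring_1) \<in> invertibles \<Longrightarrow> - x \<in> invertibles"
  unfolding invertibles_def by (auto intro: exI[of _ "- _"])

lemma inv_both: assumes "(x*y::'a::ring_1) \<in> invertibles" "y*x \<in> invertibles"
  shows "x \<in> invertibles"
proof -
  obtain z where z: "x*y*z = 1" using assms(1) unfolding invertibles_def by blast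
  obtain w where w: "w*(y*x) = 1" using assms(2) unfolding invertibles_def by blast
  have "w*y = w*y*(x*(y*z))" using z by (simp add: mult.assoc)
  also have "\<dots> = (w*(y*x))*(y*z)" by (simp add: mult.assoc)
  also have "\<dots> = y*z" using w by simp
  finally have "w*y = y*z" .
  have "x * (y*z) = 1" using z by (simp add: mult.assoc)
  moreover have "(y*z) * x = 1" using w \<open>w*y = y*z\<close>[symmetric] by (simp add: mult.assoc)
  ultimately show ?thesis unfolding invertibles_def by blast
qed

lemma inv_scaleR: "r \<noteq> 0 \<Longrightarrow> (x::'a::real_normed_algebra_1) \<in> invertibles \<Longrightarrow> r *\<^sub>R x \<in> invertibles"
proof -
  assume r: "r \<noteq> 0" and x: "x \<in> invertibles"
  have "r *\<^sub>R (1::'a) \<in> invertibles" unfolding invertibles_def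
    using r by (intro CollectI exI[of _ "inverse r *\<^sub>R 1"]) simp
  then have "(r *\<^sub>R 1) * x \<in> invertibles" using x inv_mult by blast
  then show ?thesis by simp
qed

lemma neumann:
  fixes x :: "'a::{banach,real_normed_algebra_1}"
  assumes "norm x < 1"
  shows "1 - x \<in> invertibles"
proof -
  define y where "y = suminf (\<lambda>n. x^n)"
  have s: "(\<lambda>n. x^n) sums y" unfolding y_def
    using complete_algebra_summable_geometric[OF assms] by (simp add: summable_sums)
  have tel: "(\<lambda>n. x^n - x^Suc n) sums (x^0 - 0)"
    by (rule telescope_sums') (rule LIMSEQ_power_zero[OF assms])
  have "(\<lambda>n. (1 - x) * x^n) sums ((1-x)*y)" by (rule sums_mult[OF s])
  moreover have "(\<lambda>n. (1 - x) * x^n) = (\<lambda>n. x^n - x^Suc n)"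
    by (simp add: algebra_simps)
  ultimately have 1: "(1-x)*y = 1" using tel sums_unique2 by fastforce
  have "(\<lambda>n. x^n * (1 - x)) sums (y*(1-x))" by (rule sums_mult2[OF s])
  moreover have "(\<lambda>n. x^n * (1 - x)) = (\<lambda>n. x^n - x^Suc n)"
    by (simp add: algebra_simps power_Suc2 power_commutes)
  ultimately have 2: "y*(1-x) = 1" using tel sums_unique2 by fastforce
  show ?thesis unfolding invertibles_def using 1 2 by blast
qed

lemma split_inv:
  fixes v :: "'a::{banach,real_normed_algebra_1}"
  shows "\<exists>l. v - l *\<^sub>R 1 \<in> invertibles \<and> l *\<^sub>R (1::'a) \<in> invertibles"
proof -
  define l where "l = norm v + 1"
  have l: "l > 0" unfolding l_def by (simp add: add_nonneg_pos)
  have "norm (inverse l *\<^sub>R v) < 1" using l unfolding l_def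
    by (simp add: field_simps)
  then have "1 - inverse l *\<^sub>R v \<in> invertibles" by (rule neumann)
  then have i: "(- l) *\<^sub>R (1 - inverse l *\<^sub>R v) \<in> invertibles"
    using l by (intro inv_scaleR) auto
  have e: "(- l) *\<^sub>R (1 - inverse l *\<^sub>R v) = v - l *\<^sub>R 1"
    using l by (simp add: algebra_simps)
  have j: "l *\<^sub>R (1::'a) \<in> invertibles" using inv_scaleR[OF _ inv_one, of l] l by simp
  show ?thesis using i j unfolding e by blast
qed

locale hm =
  fixes A :: "'v::{banach,real_normed_algebra_1} \<Rightarrow> 'w::real_normed_algebra_1"
  assumes Aadd: "\<And>u v. A (u + v) = A u + A v"
    and Amul: "\<And>u v. A (u * v) = A u * A v"
    and A1: "A 1 = 1"
    and Asc: "\<And>r u. A (r *\<^sub>R u) = r *\<^sub>R A u"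
begin

lemma A0: "A 0 = 0" using Aadd[of 0 0] by simp
lemma Aminus: "A (- u) = - A u"
proof -
  have "A u + A (- u) = 0" using Aadd[of u "-u"] A0 by simp
  then show ?thesis by (metis neg_eq_iff_add_eq_0)
qed
lemma Adiff: "A (u - v) = A u - A v" using Aadd[of u "-v"] Aminus by simp

lemma A_inv: "u \<in> invertibles \<Longrightarrow> A u \<in> invertibles"
  unfolding invertibles_def
proof clarify
  fix y assume "u * y = 1" "y * u = 1"
  then have "A u * A y = 1" "A y * A u = 1" by (metis Amul A1)+
  then show "\<exists>z. A u * z = 1 \<and> z * A u = 1" by blast
qed

lemma fred_mult: "x \<in> fredholm A \<Longrightarrow> y \<in> fredholm A \<Longrightarrow> x*y \<in> fredholm A"
  unfolding fredholm_def by (simp add: Amul inv_mult)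

lemma fred_uminus: "x \<in> fredholm A \<Longrightarrow> -x \<in> fredholm A"
  unfolding fredholm_def by (simp add: Aminus inv_uminus)

lemma fred_scaleR: "r \<noteq> 0 \<Longrightarrow> r *\<^sub>R x \<in> fredholm A \<longleftrightarrow> x \<in> fredholm A"
  unfolding fredholm_def using inv_scaleR[of r "A x"] inv_scaleR[of "inverse r" "r *\<^sub>R A x"]
  by (auto simp: Asc)

lemma pert_add: "p \<in> fred_pert A \<Longrightarrow> p' \<in> fred_pert A \<Longrightarrow> p + p' \<in> fred_pert A"
  unfolding fred_pert_def by (simp add: add.assoc)

lemma pert_uminus: "p \<in> fred_pert A \<Longrightarrow> - p \<in> fred_pert A"
  unfolding fred_pert_def
proof clarify
  fix t assume h: "\<forall>t\<in>fredholm A. p + t \<in> fredholm A" "t \<in> fredholm A"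
  have "p + (- t) \<in> fredholm A" using h fred_uminus by blast
  then have "- (p + - t) \<in> fredholm A" by (rule fred_uminus)
  then show "- p + t \<in> fredholm A" by simp
qed

lemma pert_ker: "A k = 0 \<Longrightarrow> k \<in> fred_pert A"
  unfolding fred_pert_def fredholm_def by (simp add: Aadd)

lemma fred_pert_sum: "x \<in> fredholm A \<Longrightarrow> p \<in> fred_pert A \<Longrightarrow> x + p \<in> fredholm A"
  unfolding fred_pert_def by (metis (no_types, lifting) add.commute mem_Collect_eq)

lemma pert_mult_inv_right:
  assumes p: "p \<in> fred_pert A" and u: "u \<in> invertibles"
  shows "p * u \<in> fred_pert A"
  unfolding fred_pert_def
proof (intro CollectI ballI)
  fix t assume t: "t \<in> fredholm A"
  obtain u' where u': "u * u' = 1" "u' * u = 1" using u unfolding invertibles_def by blast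
  have "u' \<in> invertibles" using u' unfolding invertibles_def by blast
  then have "t * u' \<in> fredholm A" using t unfolding fredholm_def by (simp add: Amul A_inv inv_mult)
  then have "p + t * u' \<in> fredholm A" using p unfolding fred_pert_def by blast
  then have "(p + t * u') * u \<in> fredholm A" using u by (intro fred_mult) (simp_all add: fredholm_def A_inv)
  moreover have "(p + t * u') * u = p * u + t" using u' by (simp add: algebra_simps mult.assoc)
  ultimately show "p * u + t \<in> fredholm A" by simp
qed

lemma pert_mult_inv_left:
  assumes p: "p \<in> fred_pert A" and u: "u \<in> invertibles"
  shows "u * p \<in> fred_pert A"
  unfolding fred_pert_def
proof (intro CollectI ballI)
  fix t assume t: "t \<in> fredholm A"
  obtain u' where u': "u * u' = 1" "u' * u = 1" using u unfolding invertibles_def by blast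
  have "u' \<in> invertibles" using u' unfolding invertibles_def by blast
  then have "u' * t \<in> fredholm A" using t unfolding fredholm_def by (simp add: Amul A_inv inv_mult)
  then have "p + u' * t \<in> fredholm A" using p unfolding fred_pert_def by blast
  then have "u * (p + u' * t) \<in> fredholm A" using u by (intro fred_mult) (simp_all add: fredholm_def A_inv)
  moreover have "u * (p + u' * t) = u * p + t" using u' by (simp add: algebra_simps mult.assoc[symmetric])
  ultimately show "u * p + t \<in> fredholm A" by simp
qed

lemma pert_mult_right: "p \<in> fred_pert A \<Longrightarrow> p * v \<in> fred_pert A"
proof -
  assume p: "p \<in> fred_pert A"
  obtain l where l: "v - l *\<^sub>R 1 \<in> invertibles" "l *\<^sub>R (1::'v) \<in> invertibles" using split_inv by blast
  have "p * (v - l *\<^sub>R 1) + p * (l *\<^sub>R 1) \<in> fred_pert A"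
    using l p by (intro pert_add pert_mult_inv_right)
  then show ?thesis by (simp add: algebra_simps)
qed

lemma pert_mult_left: "p \<in> fred_pert A \<Longrightarrow> v * p \<in> fred_pert A"
proof -
  assume p: "p \<in> fred_pert A"
  obtain l where l: "v - l *\<^sub>R 1 \<in> invertibles" "l *\<^sub>R (1::'v) \<in> invertibles" using split_inv by blast
  have "(v - l *\<^sub>R 1) * p + (l *\<^sub>R 1) * p \<in> fred_pert A"
    using l p by (intro pert_add pert_mult_inv_left)
  then show ?thesis by (simp add: algebra_simps)
qed

lemma key:
  assumes t: "t \<noteq> 0" and e1: "X*Y = t *\<^sub>R Z + p1" and e2: "Y*X = t *\<^sub>R Z + p2"
    and p: "p1 \<in> fred_pert A" "p2 \<in> fred_pert A"
  shows "Z \<in> fredholm A \<longleftrightarrow> X \<in> fredholm A \<and> Y \<in> fredholm A"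
proof
  assume Z: "Z \<in> fredholm A"
  then have tZ: "t *\<^sub>R Z \<in> fredholm A" using fred_scaleR[OF t] by blast
  have "X*Y \<in> fredholm A" unfolding e1 using fred_pert_sum[OF tZ p(1)] .
  moreover have "Y*X \<in> fredholm A" unfolding e2 using fred_pert_sum[OF tZ p(2)] .
  ultimately show "X \<in> fredholm A \<and> Y \<in> fredholm A" unfolding fredholm_def
    by (simp add: Amul) (metis inv_both)
next
  assume "X \<in> fredholm A \<and> Y \<in> fredholm A"
  then have "X*Y \<in> fredholm A" using fred_mult by blast
  then have "X*Y + - p1 \<in> fredholm A" using fred_pert_sum pert_uminus p by blast
  then have "t *\<^sub>R Z \<in> fredholm A" using e1 by simp
  then show "Z \<in> fredholm A" using fred_scaleR[OF t] by blast
qed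

lemma weylI: "u \<in> invertibles \<Longrightarrow> A k = 0 \<Longrightarrow> u + k \<in> weyl A"
  unfolding weyl_def by blast

lemma weylE: "x \<in> weyl A \<Longrightarrow> (\<And>u k. x = u + k \<Longrightarrow> u \<in> invertibles \<Longrightarrow> A k = 0 \<Longrightarrow> P) \<Longrightarrow> P"
  unfolding weyl_def by blast

lemma weyl_fred: "x \<in> weyl A \<Longrightarrow> x \<in> fredholm A"
  by (erule weylE) (simp add: fredholm_def Aadd A_inv)

lemma weyl_a:
  assumes t: "t \<noteq> 0" and e1: "X*Y = t *\<^sub>R Z + k1" and k: "A k1 = 0"
    and X: "X \<in> weyl A" and Y: "Y \<in> weyl A"
  shows "Z \<in> weyl A"
proof -
  obtain u1 h1 where 1: "X = u1 + h1" "u1 \<in> invertibles" "A h1 = 0" using X by (rule weylE)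
  obtain u2 h2 where 2: "Y = u2 + h2" "u2 \<in> invertibles" "A h2 = 0" using Y by (rule weylE)
  have "Z = inverse t *\<^sub>R (X*Y - k1)" using e1 t by simp
  also have "\<dots> = inverse t *\<^sub>R (u1*u2) + inverse t *\<^sub>R (u1*h2 + h1*u2 + h1*h2 - k1)"
    unfolding 1 2 by (simp add: algebra_simps)
  finally have Z: "Z = inverse t *\<^sub>R (u1*u2) + inverse t *\<^sub>R (u1*h2 + h1*u2 + h1*h2 - k1)" .
  show ?thesis unfolding Z
    by (rule weylI) (use t 1 2 k in \<open>simp_all add: inv_scaleR inv_mult Asc Aadd Adiff Amul\<close>)
qed

lemma weyl_b:
  assumes t: "t \<noteq> 0" and e1: "X*Y = t *\<^sub>R Z + k1" and k: "A k1 = 0"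
    and X: "X \<in> weyl A" and Z: "Z \<in> weyl A"
  shows "Y \<in> weyl A"
proof -
  obtain u1 h1 where 1: "X = u1 + h1" "u1 \<in> invertibles" "A h1 = 0" using X by (rule weylE)
  obtain u h where 2: "Z = u + h" "u \<in> invertibles" "A h = 0" using Z by (rule weylE)
  obtain w where w: "u1 * w = 1" "w * u1 = 1" using 1(2) unfolding invertibles_def by blast
  have winv: "w \<in> invertibles" using w unfolding invertibles_def by blast
  have "u1 * Y = X*Y - h1*Y" unfolding 1 by (simp add: algebra_simps)
  also have "\<dots> = t *\<^sub>R u + (t *\<^sub>R h + k1 - h1*Y)" unfolding e1 2 by (simp add: algebra_simps)
  finally have uY: "u1 * Y = t *\<^sub>R u + (t *\<^sub>R h + k1 - h1*Y)" .
  have "Y = w * (u1 * Y)" using w by (simp add: mult.assoc[symmetric])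
  also have "\<dots> = t *\<^sub>R (w * u) + w * (t *\<^sub>R h + k1 - h1*Y)"
    unfolding uY by (simp add: distrib_left)
  finally have Y: "Y = t *\<^sub>R (w * u) + w * (t *\<^sub>R h + k1 - h1*Y)" .
  show ?thesis
    by (subst Y, rule weylI) (use t 1 2 k winv in \<open>simp_all add: inv_scaleR inv_mult Asc Aadd Adiff Amul\<close>)
qed

end

lemma E_pert:
  assumes "hm A" "a*b \<in> fred_pert A" "b*a \<in> fred_pert A"
  shows "(a - s*\<^sub>R 1)*(a*b)*(b - s*\<^sub>R 1) - t*\<^sub>R(a*b+b*a) \<in> fred_pert A"
proof -
  interpret hm A by fact
  have "(a - s*\<^sub>R 1)*(a*b) \<in> fred_pert A" by (rule pert_mult_left[OF assms(2)])
  then have 1: "(a - s*\<^sub>R 1)*(a*b)*(b - s*\<^sub>R 1) \<in> fred_pert A" by (rule pert_mult_right)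
  have "(a*b+b*a) * (t *\<^sub>R 1) \<in> fred_pert A"
    using assms by (intro pert_mult_right pert_add[OF assms(2,3)])
  then have 2: "- (t*\<^sub>R(a*b+b*a)) \<in> fred_pert A" using pert_uminus by simp
  show ?thesis using pert_add[OF 1 2] by simp
qed

lemma E_ker:
  assumes "hm A" "A (a*b) = 0" "A (b*a) = 0"
  shows "A ((a - s*\<^sub>R 1)*(a*b)*(b - s*\<^sub>R 1) - t*\<^sub>R(a*b+b*a)) = 0"
proof -
  interpret hm A by fact
  show ?thesis using assms by (simp add: Adiff Amul Aadd Asc)
qed

lemma qnorm_nz: "q \<noteq> qzero \<Longrightarrow> (qnorm q)\<^sup>2 \<noteq> 0"
proof -
  assume q: "q \<noteq> qzero"
  have "(qRe q)\<^sup>2 + (qI q)\<^sup>2 + (qJ q)\<^sup>2 + (qK q)\<^sup>2 \<noteq> 0"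
  proof
    assume "(qRe q)\<^sup>2 + (qI q)\<^sup>2 + (qJ q)\<^sup>2 + (qK q)\<^sup>2 = 0"
    then have "qRe q = 0" "qI q = 0" "qJ q = 0" "qK q = 0" by (smt (verit) zero_le_power2 zero_eq_power2)+
    then have "q = qzero" unfolding qzero_def by (cases q) simp
    with q show False by simp
  qed
  then show ?thesis unfolding qnorm_def by simp
qed

lemma Rq_prod:
  fixes a b :: "'v::real_normed_algebra_1"
  shows "Rq a q * Rq b q = (qnorm q)\<^sup>2 *\<^sub>R Rq (a+b) q
     + ((a - (2 * qRe q)*\<^sub>R 1)*(a*b)*(b - (2 * qRe q)*\<^sub>R 1) - (qnorm q)\<^sup>2*\<^sub>R(a*b+b*a))"
  unfolding Rq_def by (rule ident)

theorem mainTheorem1: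
  fixes lmV :: "quat \<Rightarrow> 'v::{banach,real_normed_algebra_1} \<Rightarrow> 'v"
    and rmV :: "'v \<Rightarrow> quat \<Rightarrow> 'v"
    and lmW :: "quat \<Rightarrow> 'w::{banach,real_normed_algebra_1} \<Rightarrow> 'w"
    and rmW :: "'w \<Rightarrow> quat \<Rightarrow> 'w"
    and A :: "'v \<Rightarrow> 'w"
    and a b :: 'v
  assumes "qbanach_alg lmV rmV"
    and "qbanach_alg lmW rmW"
    and "qhom lmV rmV lmW rmW A"
  shows "(a * b \<in> fred_pert A \<and> b * a \<in> fred_pert A \<longrightarrow>
            fred_S_spectrum A (a + b) - {qzero} =
            (fred_S_spectrum A a \<union> fred_S_spectrum A b) - {qzero})
       \<and> (A (a * b) = 0 \<and> A (b * a) = 0 \<longrightarrow>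
            (weyl_S_spectrum A (a + b) - {qzero} \<subseteq>
              (weyl_S_spectrum A a \<union> weyl_S_spectrum A b) - {qzero})
          \<and> (weyl_S_spectrum A a = fred_S_spectrum A a \<longrightarrow>
              weyl_S_spectrum A (a + b) - {qzero} =
              (weyl_S_spectrum A a \<union> weyl_S_spectrum A b) - {qzero}))"
proof -
  have hmA: "hm A"
  proof
    show "A (u + v) = A u + A v" for u v using assms(3) unfolding qhom_def by blast
    show "A (u * v) = A u * A v" for u v using assms(3) unfolding qhom_def by blast
    show "A 1 = 1" using assms(3) unfolding qhom_def by blast
    show "A (r *\<^sub>R u) = r *\<^sub>R A u" for r u
    proof -
      have "A (r *\<^sub>R u) = A (lmV (qofreal r) u)" using assms(1) unfolding qbanach_alg_def by simp
      also have "\<dots> = lmW (qofreal r) (A u)" using assms(3) unfolding qhom_def by blast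
      also have "\<dots> = r *\<^sub>R A u" using assms(2) unfolding qbanach_alg_def by simp
      finally show ?thesis .
    qed
  qed
  interpret hm A by (rule hmA)
  define X where "X q = Rq a q" for q
  define Y where "Y q = Rq b q" for q
  define Z where "Z q = Rq (a+b) q" for q
  define E1 where "E1 q = (a - (2 * qRe q)*\<^sub>R 1)*(a*b)*(b - (2 * qRe q)*\<^sub>R 1) - (qnorm q)\<^sup>2*\<^sub>R(a*b+b*a)" for q
  define E2 where "E2 q = (b - (2 * qRe q)*\<^sub>R 1)*(b*a)*(a - (2 * qRe q)*\<^sub>R 1) - (qnorm q)\<^sup>2*\<^sub>R(b*a+a*b)" for q
  have e1: "X q * Y q = (qnorm q)\<^sup>2 *\<^sub>R Z q + E1 q" for q
    unfolding X_def Y_def Z_def E1_def by (rule Rq_prod)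
  have e2: "Y q * X q = (qnorm q)\<^sup>2 *\<^sub>R Z q + E2 q" for q
    unfolding X_def Y_def Z_def E2_def using Rq_prod[of b q a] by (simp add: add.commute)
  have P1: "a * b \<in> fred_pert A \<and> b * a \<in> fred_pert A \<Longrightarrow> Z q \<in> fredholm A \<longleftrightarrow> X q \<in> fredholm A \<and> Y q \<in> fredholm A"
    if q: "q \<noteq> qzero" for q
    by (rule key[OF qnorm_nz[OF q] e1 e2]) (auto simp: E1_def E2_def intro: E_pert[OF hmA])
  show ?thesis
  proof (intro conjI impI)
    assume "a * b \<in> fred_pert A \<and> b * a \<in> fred_pert A"
    then show "fred_S_spectrum A (a + b) - {qzero} =
            (fred_S_spectrum A a \<union> fred_S_spectrum A b) - {qzero}"
      using P1 unfolding fred_S_spectrum_def X_def Y_def Z_def by auto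
  next
    assume ker: "A (a * b) = 0 \<and> A (b * a) = 0"
    then have pe: "a * b \<in> fred_pert A \<and> b * a \<in> fred_pert A" using pert_ker by blast
    have k1: "A (E1 q) = 0" for q unfolding E1_def using E_ker[OF hmA] ker by blast
    have k2: "A (E2 q) = 0" for q unfolding E2_def using E_ker[OF hmA] ker by blast
    show "weyl_S_spectrum A (a + b) - {qzero} \<subseteq>
              (weyl_S_spectrum A a \<union> weyl_S_spectrum A b) - {qzero}"
    proof
      fix q assume "q \<in> weyl_S_spectrum A (a + b) - {qzero}"
      then have q: "q \<noteq> qzero" "Z q \<notin> weyl A" unfolding weyl_S_spectrum_def Z_def by auto
      then have "\<not> (X q \<in> weyl A \<and> Y q \<in> weyl A)"
        using weyl_a[OF qnorm_nz[OF q(1)] e1 k1] by blast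
      then show "q \<in> (weyl_S_spectrum A a \<union> weyl_S_spectrum A b) - {qzero}"
        using q unfolding weyl_S_spectrum_def X_def Y_def by auto
    qed
    assume eq: "weyl_S_spectrum A a = fred_S_spectrum A a"
    show "weyl_S_spectrum A (a + b) - {qzero} =
              (weyl_S_spectrum A a \<union> weyl_S_spectrum A b) - {qzero}"
    proof
      show "weyl_S_spectrum A (a + b) - {qzero} \<subseteq>
              (weyl_S_spectrum A a \<union> weyl_S_spectrum A b) - {qzero}"
      proof
        fix q assume "q \<in> weyl_S_spectrum A (a + b) - {qzero}"
        then have q: "q \<noteq> qzero" "Z q \<notin> weyl A" unfolding weyl_S_spectrum_def Z_def by auto
        then have "\<not> (X q \<in> weyl A \<and> Y q \<in> weyl A)"
          using weyl_a[OF qnorm_nz[OF q(1)] e1 k1] by blast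
        then show "q \<in> (weyl_S_spectrum A a \<union> weyl_S_spectrum A b) - {qzero}"
          using q unfolding weyl_S_spectrum_def X_def Y_def by auto
      qed
    next
      show "(weyl_S_spectrum A a \<union> weyl_S_spectrum A b) - {qzero} \<subseteq>
              weyl_S_spectrum A (a + b) - {qzero}"
      proof
        fix q assume qa: "q \<in> (weyl_S_spectrum A a \<union> weyl_S_spectrum A b) - {qzero}"
        then have q: "q \<noteq> qzero" by blast
        have "Z q \<notin> weyl A"
        proof
          assume Zw: "Z q \<in> weyl A"
          then have "X q \<in> fredholm A" using P1[OF q pe] weyl_fred by blast
          then have "q \<notin> fred_S_spectrum A a" unfolding fred_S_spectrum_def X_def by simp
          then have Xw: "X q \<in> weyl A" using eq unfolding weyl_S_spectrum_def X_def by auto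
          have Yw: "Y q \<in> weyl A" using weyl_b[OF qnorm_nz[OF q] e1 k1 Xw Zw] .
          show False using qa Xw Yw unfolding weyl_S_spectrum_def X_def Y_def by auto
        qed
        then show "q \<in> weyl_S_spectrum A (a + b) - {qzero}"
          using q unfolding weyl_S_spectrum_def Z_def by auto
      qed
    qed
  qed
qed

end
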